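(* Let $N\ge 1$, $E=\{0,1,\dots,N\}$, and let $Q$ be the tridiagonal matrix on $E$ described in the context, with $a_i>0$ $(1\le i\le N)$, $b_i>0$ $(0\le i\le N-1)$, $c_i\ge 0$ $(0\le i\le N)$ and $c_N>0$; set $b_N:=c_N$. Fix $z\in\mathbb R$ and $v\in\mathbb R^{N+1}$, and define $\alpha^{(i)}_\ell$, $G^{(i)}_{\ell,k}$, $M_{N-1}$ and $N_n$ as in the context. Suppose $D:=c_N-z+M_{N-1}(c_\cdot-z)\neq 0$, where $c_\cdot-z$ denotes the vector $(c_j-z)_{j\in E}$. Then the equation $Qw+zw=-v$ has a unique solution $w=(w_n)_{n\in E}$, given by $$w_n=\frac{v_N+M_{N-1}(v)}{c_N-z+M_{N-1}(c_\cdot-z)}\bigl[1+N_{n-1}(c_\cdot-z)\bigr]-N_{n-1}(v),\qquad 0\le n\le N.$$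
   Context: The matrix $Q=(q_{ij})_{i,j\in E}$ is tridiagonal with: $q_{00}=-(b_0+c_0)$, $q_{01}=b_0$; for $1\le n\le N-1$: $q_{n,n-1}=a_n$, $q_{nn}=-(a_n+b_n+c_n)$, $q_{n,n+1}=b_n$; $q_{N,N-1}=a_N$, $q_{NN}=-(a_N+c_N)$; all other entries are $0$. Convention: $b_N:=c_N$. For fixed $i$ with $0\le i\le N-1$ and $1\le \ell\le N-i$ define $\alpha^{(i)}_1=(c_{i+1}-z+a_{i+1})/b_{i+1}$ and $\alpha^{(i)}_\ell=(c_{i+\ell}-z)/b_{i+\ell}$ for $2\le\ell\le N-i$. Define $G^{(i)}_{\ell,1}=\alpha^{(i)}_\ell$ for $\ell=1,\dots,N-i$, and recursively for $k=2,\dots,N-i$: $G^{(i)}_{\ell,k}=G^{(i)}_{\ell,k-1}+\alpha^{(i+k-1)}_{\ell-k+1}\,G^{(i)}_{k-1,k-1}$ for $\ell=k,k+1,\dots,N-i$. Set $G^{(j)}_{0,0}=1$ for all $j$. For a vector $h=(h_j)_{j\in E}$ define $M_{N-1}(h)=c_N\sum_{j=0}^{N-1}\frac{h_j}{b_j}G^{(j)}_{N-j,N-j}$, $N_n(h)=\sum_{j=0}^{n}\frac{h_j}{b_j}\sum_{k=0}^{n-j}G^{(j)}_{k,k}$ for $0\le n<N$, and $N_{-1}(h)=0$. *)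

theory Defs
  imports Complex_Main
begin

text \<open>Birth-death type tridiagonal generator Q on E = {0..N}; vectors are nat => real,
  only the entries indexed by 0..N matter.\<close>

definition Qm :: "nat \<Rightarrow> (nat \<Rightarrow> real) \<Rightarrow> (nat \<Rightarrow> real) \<Rightarrow> (nat \<Rightarrow> real) \<Rightarrow> nat \<Rightarrow> nat \<Rightarrow> real" where
  "Qm N a b c i j =
     (if i = 0 then (if j = 0 then -(b 0 + c 0) else if j = 1 then b 0 else 0)
      else if i < N then
        (if j = i - 1 then a i else if j = i then -(a i + b i + c i) else if j = i + 1 then b i else 0)
      else if i = N then
        (if j = N - 1 then a N else if j = N then -(a N + c N) else 0)
      else 0)"

definition bN :: "nat \<Rightarrow> (nat \<Rightarrow> real) \<Rightarrow> (nat \<Rightarrow> real) \<Rightarrow> nat \<Rightarrow> real" where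
  "bN N b c j = (if j = N then c N else b j)"

definition alpha :: "nat \<Rightarrow> (nat \<Rightarrow> real) \<Rightarrow> (nat \<Rightarrow> real) \<Rightarrow> (nat \<Rightarrow> real) \<Rightarrow> real \<Rightarrow> nat \<Rightarrow> nat \<Rightarrow> real" where
  "alpha N a b c z i l =
     (if l = 1 then (c (i + 1) - z + a (i + 1)) / bN N b c (i + 1)
      else (c (i + l) - z) / bN N b c (i + l))"

fun G :: "nat \<Rightarrow> (nat \<Rightarrow> real) \<Rightarrow> (nat \<Rightarrow> real) \<Rightarrow> (nat \<Rightarrow> real) \<Rightarrow> real \<Rightarrow> nat \<Rightarrow> nat \<Rightarrow> nat \<Rightarrow> real" where
  "G N a b c z i l 0 = 1"
| "G N a b c z i l (Suc 0) = alpha N a b c z i l"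
| "G N a b c z i l (Suc (Suc k)) =
     G N a b c z i l (Suc k) + alpha N a b c z (i + Suc k) (l - Suc k) * G N a b c z i (Suc k) (Suc k)"

definition MN :: "nat \<Rightarrow> (nat \<Rightarrow> real) \<Rightarrow> (nat \<Rightarrow> real) \<Rightarrow> (nat \<Rightarrow> real) \<Rightarrow> real \<Rightarrow> (nat \<Rightarrow> real) \<Rightarrow> real" where
  "MN N a b c z h = c N * (\<Sum>j<N. h j / b j * G N a b c z j (N - j) (N - j))"

definition NN :: "nat \<Rightarrow> (nat \<Rightarrow> real) \<Rightarrow> (nat \<Rightarrow> real) \<Rightarrow> (nat \<Rightarrow> real) \<Rightarrow> real \<Rightarrow> (nat \<Rightarrow> real) \<Rightarrow> nat \<Rightarrow> real" where
  "NN N a b c z h n = (\<Sum>j\<le>n. h j / b j * (\<Sum>k\<le>n - j. G N a b c z j k k))"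

definition NNprev :: "nat \<Rightarrow> (nat \<Rightarrow> real) \<Rightarrow> (nat \<Rightarrow> real) \<Rightarrow> (nat \<Rightarrow> real) \<Rightarrow> real \<Rightarrow> (nat \<Rightarrow> real) \<Rightarrow> nat \<Rightarrow> real" where
  "NNprev N a b c z h n = (if n = 0 then 0 else NN N a b c z h (n - 1))"

end

theory Submission
  imports Defs
begin

context
  fixes N :: nat and a b c :: "nat \<Rightarrow> real" and z :: real
begin

lemma G_unroll:
  "0 < k \<Longrightarrow> G N a b c z i l k = (\<Sum>r<k. alpha N a b c z (i+r) (l-r) * G N a b c z i r r)"
proof (induction k)
  case 0 then show ?case by simp
next
  case (Suc k)
  show ?case
  proof (cases k)
    case 0 then show ?thesis by simp
  next
    case (Suc k')
    with Suc.IH have "G N a b c z i l k = (\<Sum>r<k. alpha N a b c z (i+r) (l-r) * G N a b c z i r r)" by simp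
    then show ?thesis using Suc by simp
  qed
qed

lemma Gkey:
  assumes "0 < m" "bN N b c (i+m) \<noteq> 0"
  shows "bN N b c (i+m) * G N a b c z i m m =
     (c (i+m) - z) * (\<Sum>r<m. G N a b c z i r r) + a (i+m) * G N a b c z i (m-1) (m-1)"
proof -
  obtain k where m: "m = Suc k" using assms(1) by (cases m) auto
  have s: "G N a b c z i m m = (\<Sum>r<k. alpha N a b c z (i+r) (m-r) * G N a b c z i r r)
      + alpha N a b c z (i+k) 1 * G N a b c z i k k"
    using G_unroll[of m i m] m by simp
  have s1: "(\<Sum>r<k. alpha N a b c z (i+r) (m-r) * G N a b c z i r r)
     = (\<Sum>r<k. (c (i+m) - z) / bN N b c (i+m) * G N a b c z i r r)"
  proof (rule sum.cong)
    fix r assume "r \<in> {..<k}"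
    then have "m - r \<noteq> 1" "i + r + (m - r) = i + m" using m by auto
    then show "alpha N a b c z (i+r) (m-r) * G N a b c z i r r = (c (i+m) - z) / bN N b c (i+m) * G N a b c z i r r"
      unfolding alpha_def by simp
  qed simp
  have s2: "alpha N a b c z (i+k) 1 = (c (i+m) - z + a (i+m)) / bN N b c (i+m)"
    unfolding alpha_def using m by simp
  have "bN N b c (i+m) * G N a b c z i m m
      = (c (i+m) - z) * (\<Sum>r<k. G N a b c z i r r) + (c (i+m) - z + a (i+m)) * G N a b c z i k k"
  proof -
    have e: "(\<Sum>r<k. (c (i+m) - z) / bN N b c (i+m) * G N a b c z i r r)
      = (c (i+m) - z) / bN N b c (i+m) * (\<Sum>r<k. G N a b c z i r r)"
      by (simp add: sum_distrib_left)
    show ?thesis unfolding s s1 s2 e using assms(2) by (simp add: field_simps)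
  qed
  then show ?thesis using m by (simp add: algebra_simps)
qed

definition Dd :: "(nat \<Rightarrow> real) \<Rightarrow> nat \<Rightarrow> real" where
  "Dd h n = (\<Sum>j\<le>n. h j / bN N b c j * G N a b c z j (n-j) (n-j))"

lemma sum_atMost_last: "sum f {..n::nat} = sum f {..<n} + f n"
proof -
  have "{..n} = insert n {..<n}" by auto
  then show ?thesis by (simp add: add.commute)
qed

lemma NN_0: "NN N a b c z h 0 = h 0 / b 0"
  unfolding NN_def by simp

lemma NN_Suc: "NN N a b c z h (Suc n) = NN N a b c z h n
   + (\<Sum>j\<le>Suc n. h j / b j * G N a b c z j (Suc n - j) (Suc n - j))"
proof -
  have A: "(\<Sum>j\<le>n. h j / b j * (\<Sum>k\<le>Suc n - j. G N a b c z j k k))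
     = (\<Sum>j\<le>n. h j / b j * (\<Sum>k\<le>n - j. G N a b c z j k k))
       + (\<Sum>j\<le>n. h j / b j * G N a b c z j (Suc n - j) (Suc n - j))"
  proof -
    have "(\<Sum>j\<le>n. h j / b j * (\<Sum>k\<le>Suc n - j. G N a b c z j k k))
      = (\<Sum>j\<le>n. h j / b j * (\<Sum>k\<le>n - j. G N a b c z j k k)
           + h j / b j * G N a b c z j (Suc n - j) (Suc n - j))"
    proof (rule sum.cong)
      fix j assume "j \<in> {..n}"
      then have "Suc n - j = Suc (n - j)" by auto
      then show "h j / b j * (\<Sum>k\<le>Suc n - j. G N a b c z j k k) = h j / b j * (\<Sum>k\<le>n - j. G N a b c z j k k)
           + h j / b j * G N a b c z j (Suc n - j) (Suc n - j)"
        by (simp add: distrib_left)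
    qed simp
    then show ?thesis by (simp add: sum.distrib)
  qed
  show ?thesis unfolding NN_def
    by (simp only: sum.atMost_Suc A) simp
qed

lemma NN_step:
  assumes "n < N"
  shows "NN N a b c z h n = NNprev N a b c z h n + Dd h n"
proof (cases n)
  case 0
  then show ?thesis using assms unfolding NN_def NNprev_def Dd_def bN_def by simp
next
  case (Suc p)
  have "(\<Sum>j\<le>Suc p. h j / b j * G N a b c z j (Suc p - j) (Suc p - j))
      = (\<Sum>j\<le>Suc p. h j / bN N b c j * G N a b c z j (Suc p - j) (Suc p - j))"
    by (rule sum.cong) (use assms Suc in \<open>auto simp: bN_def\<close>)
  then show ?thesis using Suc unfolding NNprev_def Dd_def by (simp add: NN_Suc)
qed

lemma bN_nz:
  assumes hb: "\<And>j. j < N \<Longrightarrow> b j \<noteq> 0" and hc: "c N \<noteq> 0" and "j \<le> N"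
  shows "bN N b c j \<noteq> 0"
  using assms unfolding bN_def by auto

lemma Dd_0:
  assumes hb: "\<And>j. j < N \<Longrightarrow> b j \<noteq> 0" and hc: "c N \<noteq> 0"
  shows "bN N b c 0 * Dd h 0 = h 0"
  using bN_nz[OF hb hc, of 0] unfolding Dd_def by simp

lemma Dd_rec:
  assumes hb: "\<And>j. j < N \<Longrightarrow> b j \<noteq> 0" and hc: "c N \<noteq> 0" and n: "1 \<le> n" "n \<le> N"
  shows "bN N b c n * Dd h n - a n * Dd h (n-1) = h n + (c n - z) * NN N a b c z h (n-1)"
proof -
  obtain p where p: "n = Suc p" using n by (cases n) auto
  have bn: "bN N b c n \<noteq> 0" using bN_nz[OF hb hc n(2)] .
  have D1: "Dd h n = (\<Sum>j\<le>p. h j / bN N b c j * G N a b c z j (n-j) (n-j)) + h n / bN N b c n"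
    unfolding Dd_def p by (simp add: sum.atMost_Suc)
  have T: "bN N b c n * (\<Sum>j\<le>p. h j / bN N b c j * G N a b c z j (n-j) (n-j))
    = (\<Sum>j\<le>p. (c n - z) * (h j / b j * (\<Sum>k\<le>p-j. G N a b c z j k k))
         + a n * (h j / bN N b c j * G N a b c z j (p-j) (p-j)))"
    unfolding sum_distrib_left[of "bN N b c n"]
  proof (rule sum.cong)
    fix j assume j: "j \<in> {..p}"
    then have jm: "0 < n - j" "j + (n - j) = n" "n - j - 1 = p - j" "{..<n-j} = {..p-j}" using p by auto
    have bj: "bN N b c j = b j" using j p n unfolding bN_def by auto
    have K: "bN N b c n * G N a b c z j (n-j) (n-j) = (c n - z) * (\<Sum>k\<le>p-j. G N a b c z j k k)
       + a n * G N a b c z j (p-j) (p-j)"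
      using Gkey[of "n-j" j] jm bn by simp
    show "bN N b c n * (h j / bN N b c j * G N a b c z j (n - j) (n - j)) =
         (c n - z) * (h j / b j * (\<Sum>k\<le>p - j. G N a b c z j k k)) +
         a n * (h j / bN N b c j * G N a b c z j (p - j) (p - j))"
    proof -
      have "bN N b c n * (h j / bN N b c j * G N a b c z j (n - j) (n - j))
          = h j / b j * (bN N b c n * G N a b c z j (n - j) (n - j))" using bj by simp
      also have "\<dots> = h j / b j * ((c n - z) * (\<Sum>k\<le>p-j. G N a b c z j k k)
       + a n * G N a b c z j (p-j) (p-j))" using K by simp
      moreover have "b j \<noteq> 0" using hb j p n by auto
      ultimately show ?thesis using bj by (simp add: field_simps)
    qed
  qed simp
  have "bN N b c n * Dd h n = (c n - z) * NN N a b c z h p + a n * Dd h p + h n"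
  proof -
    have "bN N b c n * Dd h n = bN N b c n * (\<Sum>j\<le>p. h j / bN N b c j * G N a b c z j (n-j) (n-j)) + h n"
      unfolding D1 using bn by (simp add: distrib_left)
    also have "\<dots> = (c n - z) * NN N a b c z h p + a n * Dd h p + h n"
      unfolding T sum.distrib NN_def Dd_def sum_distrib_left[symmetric] by simp
    finally show ?thesis .
  qed
  then show ?thesis using p by simp
qed

lemma Dd_N:
  assumes hb: "\<And>j. j < N \<Longrightarrow> b j \<noteq> 0" and hc: "c N \<noteq> 0"
  shows "c N * Dd h N = MN N a b c z h + h N"
proof -
  have "Dd h N = (\<Sum>j<N. h j / b j * G N a b c z j (N-j) (N-j)) + h N / c N"
    unfolding Dd_def sum_atMost_last by (simp add: bN_def)
  then show ?thesis unfolding MN_def using hc by (simp add: distrib_left)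
qed

definition rowE :: "(nat \<Rightarrow> real) \<Rightarrow> nat \<Rightarrow> real" where
  "rowE w n = (if n = 0 then b 0 * (w 1 - w 0) - (c 0 - z) * w 0
     else if n < N then b n * (w (n+1) - w n) - a n * (w n - w (n-1)) - (c n - z) * w n
     else - a N * (w N - w (N-1)) - (c N - z) * w N)"

lemma Qrow:
  assumes "1 \<le> N" "n \<le> N"
  shows "(\<Sum>j\<le>N. Qm N a b c n j * w j) + z * w n = rowE w n"
proof -
  consider "n = 0" | "0 < n" "n < N" | "n = N" "n \<noteq> 0" using assms by linarith
  then show ?thesis
  proof cases
    case 1
    have "\<And>j. Qm N a b c n j * w j = (if j = 0 then -(b 0 + c 0) * w 0 else 0) + (if j = 1 then b 0 * w 1 else 0)"
      using 1 by (auto simp: Qm_def)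
    then have "(\<Sum>j\<le>N. Qm N a b c n j * w j) = -(b 0 + c 0) * w 0 + b 0 * w 1"
      using assms by (simp add: sum.distrib)
    then show ?thesis using 1 unfolding rowE_def by (simp add: algebra_simps)
  next
    case 2
    have "\<And>j. Qm N a b c n j * w j = (if j = n - 1 then a n * w (n-1) else 0)
       + (if j = n then -(a n + b n + c n) * w n else 0) + (if j = n + 1 then b n * w (n+1) else 0)"
      using 2 by (auto simp: Qm_def)
    moreover have "n - 1 \<in> {..N}" "n \<in> {..N}" "n + 1 \<in> {..N}" using 2 by auto
    ultimately have "(\<Sum>j\<le>N. Qm N a b c n j * w j) = a n * w (n-1) - (a n + b n + c n) * w n + b n * w (n+1)"
      by (simp only: sum.distrib sum.delta finite_atMost if_True)
    then show ?thesis using 2 unfolding rowE_def by (simp add: algebra_simps)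
  next
    case 3
    have "\<And>j. Qm N a b c n j * w j = (if j = N - 1 then a N * w (N-1) else 0)
       + (if j = N then -(a N + c N) * w N else 0)"
      using 3 by (auto simp: Qm_def)
    moreover have "N - 1 \<in> {..N}" "N \<in> {..N}" using 3 by auto
    ultimately have "(\<Sum>j\<le>N. Qm N a b c n j * w j) = a N * w (N-1) - (a N + c N) * w N"
      by (simp only: sum.distrib sum.delta finite_atMost if_True)
    then show ?thesis using 3 unfolding rowE_def by (simp add: algebra_simps)
  qed
qed

lemma rowE_cong: "(\<And>j. j \<le> N \<Longrightarrow> w j = w' j) \<Longrightarrow> n \<le> N \<Longrightarrow> 1 \<le> N \<Longrightarrow> rowE w n = rowE w' n"
  unfolding rowE_def by auto

lemma rowE_diff: "rowE (\<lambda>j. w j - w' j) n = rowE w n - rowE w' n"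
  unfolding rowE_def by (simp add: algebra_simps)

definition uu :: "(nat \<Rightarrow> real) \<Rightarrow> real \<Rightarrow> nat \<Rightarrow> real" where
  "uu v W n = W * (1 + NNprev N a b c z (\<lambda>j. c j - z) n) - NNprev N a b c z v n"

lemma uu_step: "n < N \<Longrightarrow> uu v W (Suc n) - uu v W n = W * Dd (\<lambda>j. c j - z) n - Dd v n"
  using NN_step[of n] unfolding uu_def by (simp add: NNprev_def algebra_simps)

lemma rows_lt:
  assumes hb: "\<And>j. j < N \<Longrightarrow> b j \<noteq> 0" and hc: "c N \<noteq> 0" and n: "n < N"
  shows "rowE (uu v W) n = - v n"
proof (cases n)
  case 0
  have d: "uu v W 1 - uu v W 0 = W * Dd (\<lambda>j. c j - z) 0 - Dd v 0" using uu_step[of 0] n 0 by simp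
  have b0: "bN N b c 0 = b 0" using n unfolding bN_def by auto
  have r1: "b 0 * Dd (\<lambda>j. c j - z) 0 = c 0 - z" using Dd_0[OF hb hc] b0 by metis
  have r2: "b 0 * Dd v 0 = v 0" using Dd_0[OF hb hc] b0 by metis
  have u0: "uu v W 0 = W" unfolding uu_def NNprev_def by simp
  have "rowE (uu v W) n = b 0 * (W * Dd (\<lambda>j. c j - z) 0 - Dd v 0) - (c 0 - z) * W"
    unfolding rowE_def using 0 d u0 by simp
  also have "\<dots> = W * (b 0 * Dd (\<lambda>j. c j - z) 0) - b 0 * Dd v 0 - (c 0 - z) * W"
    by (simp add: algebra_simps)
  finally show ?thesis unfolding r1 r2 using 0 by (simp add: algebra_simps)
next
  case (Suc p)
  let ?g = "\<lambda>j. c j - z"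
  have d1: "uu v W (n+1) - uu v W n = W * Dd ?g n - Dd v n" using uu_step[of n] n by simp
  have d0: "uu v W n - uu v W (n-1) = W * Dd ?g (n-1) - Dd v (n-1)" using uu_step[of p] n Suc by simp
  have bn: "bN N b c n = b n" using n unfolding bN_def by auto
  have P: "NN N a b c z h (n-1) = NNprev N a b c z h n" for h unfolding NNprev_def using Suc by simp
  have r1: "b n * Dd ?g n - a n * Dd ?g (n-1) = ?g n + ?g n * NNprev N a b c z ?g n"
    using Dd_rec[OF hb hc, of n ?g] n Suc bn P by simp
  have r2: "b n * Dd v n - a n * Dd v (n-1) = v n + ?g n * NNprev N a b c z v n"
    using Dd_rec[OF hb hc, of n v] n Suc bn P by simp
  have "rowE (uu v W) n = b n * (W * Dd ?g n - Dd v n) - a n * (W * Dd ?g (n-1) - Dd v (n-1))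
      - ?g n * (W * (1 + NNprev N a b c z ?g n) - NNprev N a b c z v n)"
    unfolding rowE_def using Suc n d1 d0 by (simp add: uu_def)
  also have "\<dots> = W * (b n * Dd ?g n - a n * Dd ?g (n-1)) - (b n * Dd v n - a n * Dd v (n-1))
      - ?g n * (W * (1 + NNprev N a b c z ?g n) - NNprev N a b c z v n)"
    by (simp add: algebra_simps)
  also have "\<dots> = - v n" unfolding r1 r2 by (simp add: algebra_simps)
  finally show ?thesis .
qed

lemma row_N:
  assumes hb: "\<And>j. j < N \<Longrightarrow> b j \<noteq> 0" and hc: "c N \<noteq> 0" and N: "1 \<le> N"
  shows "rowE (uu v W) N = - v N - W * ((c N - z) + MN N a b c z (\<lambda>j. c j - z)) + (v N + MN N a b c z v)"
proof -
  let ?g = "\<lambda>j. c j - z"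
  obtain p where p: "N = Suc p" using N by (cases N) auto
  have d0: "uu v W N - uu v W (N-1) = W * Dd ?g (N-1) - Dd v (N-1)" using uu_step[of p] p by simp
  have bn: "bN N b c N = c N" unfolding bN_def by auto
  have P: "NN N a b c z h (N-1) = NNprev N a b c z h N" for h unfolding NNprev_def using p by simp
  have r1: "a N * Dd ?g (N-1) = MN N a b c z ?g - ?g N * NNprev N a b c z ?g N"
    using Dd_rec[OF hb hc N order.refl, of ?g] Dd_N[OF hb hc, of ?g] bn P by simp
  have r2: "a N * Dd v (N-1) = MN N a b c z v - ?g N * NNprev N a b c z v N"
    using Dd_rec[OF hb hc N order.refl, of v] Dd_N[OF hb hc, of v] bn P by simp
  have "rowE (uu v W) N = - (W * (a N * Dd ?g (N-1)) - a N * Dd v (N-1))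
      - ?g N * (W * (1 + NNprev N a b c z ?g N) - NNprev N a b c z v N)"
  proof -
    have "rowE (uu v W) N = - a N * (uu v W N - uu v W (N-1)) - ?g N * uu v W N"
      unfolding rowE_def using p by simp
    also have "\<dots> = - a N * (W * Dd ?g (N-1) - Dd v (N-1)) - ?g N * uu v W N" unfolding d0 ..
    finally show ?thesis by (simp add: uu_def algebra_simps)
  qed
  also have "\<dots> = - v N - W * ((c N - z) + MN N a b c z (\<lambda>j. c j - z)) + (v N + MN N a b c z v)"
    unfolding r1 r2 by (simp add: algebra_simps)
  finally show ?thesis .
qed

end


theorem mainTheorem1:
  fixes N :: nat and a b c v :: "nat \<Rightarrow> real" and z :: real
  assumes "N \<ge> 1"
    and "\<And>i. 1 \<le> i \<Longrightarrow> i \<le> N \<Longrightarrow> a i > 0"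
    and "\<And>i. i \<le> N - 1 \<Longrightarrow> b i > 0"
    and "\<And>i. i \<le> N \<Longrightarrow> c i \<ge> 0"
    and "c N > 0"
    and "c N - z + MN N a b c z (\<lambda>j. c j - z) \<noteq> 0"
  shows "\<forall>w :: nat \<Rightarrow> real.
           (\<forall>n\<le>N. (\<Sum>j\<le>N. Qm N a b c n j * w j) + z * w n = - v n)
           \<longleftrightarrow>
           (\<forall>n\<le>N. w n =
              (v N + MN N a b c z v) / (c N - z + MN N a b c z (\<lambda>j. c j - z))
                * (1 + NNprev N a b c z (\<lambda>j. c j - z) n)
              - NNprev N a b c z v n)"
proof
  fix w :: "nat \<Rightarrow> real"
  have N1: "1 \<le> N" using assms(1) .
  have hb: "\<And>j. j < N \<Longrightarrow> b j \<noteq> 0"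
  proof -
    fix j :: nat assume "j < N"
    then have "j \<le> N - 1" by simp
    then show "b j \<noteq> 0" using assms(3) by force
  qed
  have hc: "c N \<noteq> 0" using assms(5) by simp
  let ?D = "c N - z + MN N a b c z (\<lambda>j. c j - z)"
  let ?W = "(v N + MN N a b c z v) / ?D"
  have D: "?D \<noteq> 0" using assms(6) .
  have rows: "(\<forall>n\<le>N. (\<Sum>j\<le>N. Qm N a b c n j * w j) + z * w n = - v n) \<longleftrightarrow>
     (\<forall>n\<le>N. rowE N a b c z w n = - v n)"
    using Qrow[OF N1] by simp
  have form: "(\<forall>n\<le>N. w n = ?W * (1 + NNprev N a b c z (\<lambda>j. c j - z) n) - NNprev N a b c z v n)
     \<longleftrightarrow> (\<forall>n\<le>N. w n = uu N a b c z v ?W n)"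
    unfolding uu_def ..
  have WD: "?W * ?D = v N + MN N a b c z v" using D by simp
  show "(\<forall>n\<le>N. (\<Sum>j\<le>N. Qm N a b c n j * w j) + z * w n = - v n) \<longleftrightarrow>
     (\<forall>n\<le>N. w n = ?W * (1 + NNprev N a b c z (\<lambda>j. c j - z) n) - NNprev N a b c z v n)"
    unfolding rows form
  proof
    assume R: "\<forall>n\<le>N. rowE N a b c z w n = - v n"
    define e where "e = (\<lambda>j. w j - uu N a b c z v (w 0) j)"
    have Re: "rowE N a b c z e n = 0" if "n < N" for n
    proof -
      have "rowE N a b c z e n = rowE N a b c z w n - rowE N a b c z (uu N a b c z v (w 0)) n"
        unfolding e_def by (rule rowE_diff)
      moreover have "rowE N a b c z w n = - v n" using R that by simp
      ultimately show ?thesis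
        using rows_lt[where N=N and a=a and b=b and c=c and z=z, OF hb hc that, of v "w 0"] by simp
    qed
    have e0: "e 0 = 0" unfolding e_def uu_def NNprev_def by simp
    have E: "n < N \<Longrightarrow> e n = 0 \<and> e (Suc n) = 0" for n
    proof (induction n)
      case 0
      have "b 0 * (e 1 - e 0) - (c 0 - z) * e 0 = 0" using Re[of 0] 0 unfolding rowE_def by simp
      then show ?case using e0 hb[of 0] 0 by simp
    next
      case (Suc n)
      then have h: "e n = 0" "e (Suc n) = 0" by auto
      have "b (Suc n) * (e (Suc n + 1) - e (Suc n)) - a (Suc n) * (e (Suc n) - e (Suc n - 1))
          - (c (Suc n) - z) * e (Suc n) = 0" using Re[of "Suc n"] Suc.prems unfolding rowE_def by simp
      then show ?case using h hb[of "Suc n"] Suc.prems by simp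
    qed
    have eq: "w n = uu N a b c z v (w 0) n" if "n \<le> N" for n
    proof -
      have "e n = 0"
      proof (cases "n < N")
        case True then show ?thesis using E by blast
      next
        case False
        then have "n = Suc (N - 1)" using that N1 by simp
        then show ?thesis using E[of "N - 1"] N1 by simp
      qed
      then show ?thesis unfolding e_def by simp
    qed
    have RC: "rowE N a b c z w N = rowE N a b c z (uu N a b c z v (w 0)) N"
      using rowE_cong[where N=N and a=a and b=b and c=c and z=z and w=w and w'="uu N a b c z v (w 0)" and n=N, OF eq order.refl N1] .
    have "rowE N a b c z w N = - v N" using R by simp
    then have "rowE N a b c z (uu N a b c z v (w 0)) N = - v N" unfolding RC .
    then have "w 0 * ?D = v N + MN N a b c z v" using row_N[where N=N and a=a and b=b and c=c and z=z, OF hb hc N1, of v "w 0"] by simp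
    then have w0: "w 0 = ?W" using D by (simp add: field_simps)
    show "\<forall>n\<le>N. w n = uu N a b c z v ?W n"
    proof (intro allI impI)
      fix n assume "n \<le> N"
      from eq[OF this] show "w n = uu N a b c z v ?W n" unfolding w0 .
    qed
  next
    assume F: "\<forall>n\<le>N. w n = uu N a b c z v ?W n"
    show "\<forall>n\<le>N. rowE N a b c z w n = - v n"
    proof (intro allI impI)
      fix n assume n: "n \<le> N"
      have "rowE N a b c z w n = rowE N a b c z (uu N a b c z v ?W) n"
        using rowE_cong[where N=N and a=a and b=b and c=c and z=z and w=w and w'="uu N a b c z v ?W" and n=n, OF _ n N1] F by blast
      also have "\<dots> = - v n"
      proof (cases "n < N")
        case True then show ?thesis using rows_lt[where N=N and a=a and b=b and c=c and z=z, OF hb hc True] by simp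
      next
        case False
        then have "n = N" using n by simp
        then show ?thesis using row_N[where N=N and a=a and b=b and c=c and z=z, OF hb hc N1, of v ?W] WD by simp
      qed
      finally show "rowE N a b c z w n = - v n" .
    qed
  qed
qed

end
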